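(* Let $\Omega\subseteq\mathbb R^{d_z}$ be open, connected and aligned-connected, with each projection $\Omega_k:=\{\mathbf z_{B_k}:\mathbf z\in\Omega\}$ contractible. Let $\mathbf f:\Omega\to\mathbb R^{d_x}$ be $C^2$ such that every two distinct slots have at most first-order interaction within $\mathbf f$ on $\Omega$, i.e. $D^2_{i,j}\mathbf f(\mathbf z)=\mathbf 0$ for all $\mathbf z\in\Omega$ whenever $i$ and $j$ lie in different slots. Then there exist functions $\mathbf f^k:\Omega_k\to\mathbb R^{d_x}$ such that $\mathbf f(\mathbf z)=\sum_{k=1}^K\mathbf f^k(\mathbf z_{B_k})$ for all $\mathbf z\in\Omega$.
   Context: Fix a partition $\{B_1,\dots,B_K\}$ of $[d_z]$ into nonempty slots; $\mathbf z_S=(z_i)_{i\in S}$. A set $S\subseteq\mathbb R^{d_z}$ is aligned-connected if for every $k\in[K]$ and every $\mathbf a'\in S$ the set $\{\mathbf a\in S:\mathbf a_{B_k}=\mathbf a'_{B_k}\}$ is path-connected. A subset of Euclidean space is contractible if it is contractible as a topological space with the subspace topology. *)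

theory Defs
  imports "HOL-Analysis.Analysis"
begin

text \<open>The block projection \<open>z_B\<close> is represented by zero-padding the coordinates
  outside \<open>B\<close>; this is a linear isometric embedding of \<open>\<real>^|B|\<close> into \<open>\<real>^d_z\<close>.\<close>
definition proj_block :: "'n::finite set \<Rightarrow> real^'n \<Rightarrow> real^'n" where
  "proj_block B z = (\<chi> i. if i \<in> B then z $ i else 0)"

definition is_slot_partition :: "nat \<Rightarrow> (nat \<Rightarrow> 'n set) \<Rightarrow> bool" where
  "is_slot_partition K B \<longleftrightarrow>
     (\<forall>k<K. B k \<noteq> {}) \<and>
     (\<forall>k<K. \<forall>k'<K. k \<noteq> k' \<longrightarrow> B k \<inter> B k' = {}) \<and>
     (\<Union>k<K. B k) = UNIV"

definition aligned_connected :: "nat \<Rightarrow> (nat \<Rightarrow> 'n::finite set) \<Rightarrow> (real^'n) set \<Rightarrow> bool" where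
  "aligned_connected K B S \<longleftrightarrow>
     (\<forall>k<K. \<forall>a'\<in>S. path_connected {a\<in>S. \<forall>i\<in>B k. a $ i = a' $ i})"

end

theory Submission
  imports Defs
begin

lemma contractible_obtain:
  assumes "contractible S"
  obtains h a where "continuous_on ({0..1::real}\<times>S) h" "h ` ({0..1}\<times>S) \<subseteq> S"
    "\<forall>x\<in>S. h(0,x) = x" "\<forall>x\<in>S. h(1,x) = a"
  using assms by (auto simp: contractible_def homotopic_with image_subset_iff_funcset)

lemma lift_unique:
  fixes P :: "'a \<Rightarrow> 'a \<Rightarrow> 'b::real_normed_vector"
  assumes compat: "\<And>x y. x\<in>U \<Longrightarrow> y\<in>U \<Longrightarrow> \<exists>d. \<forall>w\<in>U \<inter> T x \<inter> T y. P x w - P y w = d"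
  and L1: "\<forall>t\<in>{0..1::real}. \<exists>x\<in>U. \<exists>e>0. \<exists>c. \<forall>s\<in>{0..1}. dist s t < e \<longrightarrow> \<gamma> s \<in> U \<inter> T x \<and> \<phi> s = P x (\<gamma> s) + c"
  and L2: "\<forall>t\<in>{0..1::real}. \<exists>x\<in>U. \<exists>e>0. \<exists>c. \<forall>s\<in>{0..1}. dist s t < e \<longrightarrow> \<gamma> s \<in> U \<inter> T x \<and> \<psi> s = P x (\<gamma> s) + c"
  and E: "\<phi> 1 = \<psi> 1" and s: "s \<in> {0..1}"
  shows "\<phi> s = \<psi> s"
proof -
  have "(\<lambda>s. \<phi> s - \<psi> s) 1 = (\<lambda>s. \<phi> s - \<psi> s) s"
  proof (rule connected_local_const[where A="{0..1::real}"])
    show "\<forall>a\<in>{0..1}. eventually (\<lambda>b. \<phi> a - \<psi> a = \<phi> b - \<psi> b) (at a within {0..1})"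
    proof
      fix a :: real assume a: "a \<in> {0..1}"
      obtain x e1 c1 where x: "x\<in>U" "e1>0" "\<forall>s\<in>{0..1}. dist s a < e1 \<longrightarrow> \<gamma> s \<in> U \<inter> T x \<and> \<phi> s = P x (\<gamma> s) + c1"
        using L1 a by meson
      obtain y e2 c2 where y: "y\<in>U" "e2>0" "\<forall>s\<in>{0..1}. dist s a < e2 \<longrightarrow> \<gamma> s \<in> U \<inter> T y \<and> \<psi> s = P y (\<gamma> s) + c2"
        using L2 a by meson
      obtain d where d: "\<forall>w\<in>U \<inter> T x \<inter> T y. P x w - P y w = d" using compat x(1) y(1) by blast
      have *: "\<phi> b - \<psi> b = d + c1 - c2" if "b\<in>{0..1}" "dist b a < min e1 e2" for b
      proof -
        have "\<gamma> b \<in> U \<inter> T x" "\<phi> b = P x (\<gamma> b) + c1" "\<gamma> b \<in> U \<inter> T y" "\<psi> b = P y (\<gamma> b) + c2"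
          using x(3) y(3) that by auto
        then show ?thesis using d by (auto simp: algebra_simps)
      qed
      show "eventually (\<lambda>b. \<phi> a - \<psi> a = \<phi> b - \<psi> b) (at a within {0..1})"
        unfolding eventually_at using x(2) y(2) a * by (intro exI[of _ "min e1 e2"]) auto
    qed
  qed (use s in auto)
  then show ?thesis using E by simp
qed

lemma jj_bounds:
  fixes s :: real and n :: nat
  assumes "0 \<le> s" "s \<le> 1" "n \<ge> 1"
  shows "real (min (nat \<lfloor>s*n\<rfloor>) (n-1)) \<le> s * n \<and> s*n \<le> real (min (nat \<lfloor>s*n\<rfloor>) (n-1)) + 1
         \<and> min (nat \<lfloor>s*n\<rfloor>) (n-1) < n"
proof -
  have sn: "0 \<le> s*n" "s * n \<le> n" using assms by (auto simp: mult_left_le_one_le)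
  have f1: "real (nat \<lfloor>s*n\<rfloor>) \<le> s*n" using sn by (simp add: of_nat_floor)
  have eq: "real (nat \<lfloor>s*n\<rfloor>) = of_int \<lfloor>s*n\<rfloor>" using sn by simp
  have f2: "s*n < real (nat \<lfloor>s*n\<rfloor>) + 1" unfolding eq by linarith
  show ?thesis
  proof (cases "nat \<lfloor>s*n\<rfloor> \<le> n - 1")
    case True then show ?thesis using f1 f2 assms by auto
  next
    case False
    then have "min (nat \<lfloor>s*n\<rfloor>) (n-1) = n - 1" by simp
    moreover have "real (n-1) = real n - 1" using assms by simp
    moreover have "real (nat \<lfloor>s*n\<rfloor>) \<ge> real n" using False assms by linarith
    then have "real n \<le> s*n" using f1 by linarith
    ultimately show ?thesis using sn assms by auto
  qed
qed

lemma global_primitive: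
  fixes U :: "'a::real_normed_vector set" and P :: "'a \<Rightarrow> 'a \<Rightarrow> 'b::real_normed_vector"
  assumes contr: "contractible U"
  and T: "\<And>x. x\<in>U \<Longrightarrow> open (T x) \<and> x \<in> T x"
  and compat: "\<And>x y. x\<in>U \<Longrightarrow> y\<in>U \<Longrightarrow> \<exists>d. \<forall>w\<in>U \<inter> T x \<inter> T y. P x w - P y w = d"
  shows "\<exists>g. \<forall>w0\<in>U. \<exists>x\<in>U. \<exists>e>0. \<exists>c. \<forall>w\<in>U \<inter> ball w0 e. w \<in> T x \<and> g w = P x w + c"
proof -
  obtain h a where hc: "continuous_on ({0..1::real}\<times>U) h" and him: "h ` ({0..1}\<times>U) \<subseteq> U"
    and h0: "\<forall>x\<in>U. h(0,x) = x" and h1: "\<forall>x\<in>U. h(1,x) = a"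
    using contractible_obtain[OF contr] by metis
  define Lift where "Lift w \<phi> \<longleftrightarrow> \<phi> 1 = 0 \<and> (\<forall>t\<in>{0..1::real}. \<exists>x\<in>U. \<exists>e>0. \<exists>c. \<forall>s\<in>{0..1}. dist s t < e \<longrightarrow> h(s,w) \<in> U \<inter> T x \<and> \<phi> s = P x (h(s,w)) + c)" for w \<phi>
  define g where "g w = (SOME \<phi>. Lift w \<phi>) 0" for w
  define D where "D x y = (SOME d. \<forall>w\<in>U \<inter> T x \<inter> T y. P x w - P y w = d)" for x y
  have D: "\<And>x y w. x\<in>U \<Longrightarrow> y\<in>U \<Longrightarrow> w\<in>U \<inter> T x \<inter> T y \<Longrightarrow> P x w - P y w = D x y"
    unfolding D_def by (rule someI_ex[OF compat, THEN bspec]) auto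
  define S' where "S' = {0..1::real}\<times>U"
  have "\<exists>V. open V \<and> S' \<inter> h -` T x = S' \<inter> V" if "x\<in>U" for x
    using continuous_openin_preimage_gen[OF hc, of "T x"] T[OF that] unfolding S'_def
    by (auto simp: openin_open)
  then obtain Op where Op: "\<And>x. x\<in>U \<Longrightarrow> open (Op x) \<and> S' \<inter> h -` T x = S' \<inter> Op x" by metis
  have main: "\<exists>x\<in>U. \<exists>e>0. \<exists>c. \<forall>w\<in>U \<inter> ball w0 e. w \<in> T x \<and> (\<exists>\<phi>. Lift w \<phi> \<and> \<phi> 0 = P x w + c)"
    if w0: "w0 \<in> U" for w0
  proof -
    have cpt: "compact ({0..1::real}\<times>{w0})" by (intro compact_Times) auto
    have cov: "{0..1::real}\<times>{w0} \<subseteq> \<Union>(Op ` U)"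
    proof
      fix p assume p: "p \<in> {0..1::real}\<times>{w0}"
      then have pS: "p \<in> S'" "h p \<in> U" using w0 him unfolding S'_def by auto
      then have "p \<in> S' \<inter> h -` T (h p)" using T[of "h p"] by auto
      then have "p \<in> Op (h p)" using Op[OF pS(2)] by auto
      then show "p \<in> \<Union>(Op ` U)" using pS by auto
    qed
    obtain \<epsilon> where \<epsilon>: "\<epsilon> > 0" "\<And>p. p \<in> {0..1::real}\<times>{w0} \<Longrightarrow> \<exists>G\<in>Op ` U. ball p \<epsilon> \<subseteq> G"
      using Heine_Borel_lemma[OF cpt cov] Op by blast
    have key: "\<exists>x\<in>U. \<forall>s\<in>{0..1}. \<forall>w\<in>U. \<bar>s - t\<bar> < \<epsilon>/2 \<longrightarrow> dist w w0 < \<epsilon>/2 \<longrightarrow> h(s,w) \<in> U \<inter> T x"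
      if t: "t \<in> {0..1}" for t
    proof -
      obtain x where x: "x \<in> U" "ball (t,w0) \<epsilon> \<subseteq> Op x" using \<epsilon>(2)[of "(t,w0)"] t by auto
      show ?thesis
      proof (intro bexI[OF _ x(1)] ballI impI)
        fix s w assume s: "s\<in>{0..1}" "w\<in>U" "\<bar>s - t\<bar> < \<epsilon>/2" "dist w w0 < \<epsilon>/2"
        have "dist (t,w0) (s,w) < \<epsilon>"
        proof -
          have "dist (t,w0) (s,w) = sqrt ((dist t s)^2 + (dist w0 w)^2)" by (simp add: dist_Pair_Pair)
          also have "\<dots> \<le> dist t s + dist w0 w" using sqrt_add_le_add_sqrt[of "(dist t s)^2" "(dist w0 w)^2"] by simp 
          also have "\<dots> < \<epsilon>" using s by (simp add: dist_real_def dist_commute abs_minus_commute)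
          finally show ?thesis .
        qed
        then have "(s,w) \<in> Op x" using x(2) by auto
        then have "(s,w) \<in> S' \<inter> h -` T x" using Op[OF x(1)] s unfolding S'_def by auto
        then show "h(s,w) \<in> U \<inter> T x" using him s by auto
      qed
    qed
    then obtain X where X: "\<And>t. t\<in>{0..1} \<Longrightarrow> X t \<in> U \<and> (\<forall>s\<in>{0..1}. \<forall>w\<in>U. \<bar>s - t\<bar> < \<epsilon>/2 \<longrightarrow> dist w w0 < \<epsilon>/2 \<longrightarrow> h(s,w) \<in> U \<inter> T (X t))"
      by metis
    obtain n :: nat where n: "real n > 3/\<epsilon>" using reals_Archimedean2 by blast
    have "real n > 0" using n \<epsilon>(1) by (smt (verit) divide_pos_pos)
    then have n1: "n \<ge> 1" by simp
    have n\<epsilon>: "3/(2*n) < \<epsilon>/2" using n \<epsilon>(1) n1 by (simp add: field_simps)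
    define tt where "tt j = (2*real j+1)/(2*n)" for j :: nat
    have tt01: "tt j \<in> {0..1}" if "j < n" for j
      using that n1 by (auto simp: tt_def field_simps)
    define xs where "xs j = X (tt j)" for j
    define cc where "cc j = - P (xs (n-1)) a + (\<Sum>i\<in>{j..<n-1}. D (xs (Suc i)) (xs i))" for j
    have cc: "cc i = D (xs (Suc i)) (xs i) + cc (Suc i)" if "Suc i < n" for i
      unfolding cc_def using that by (simp add: sum.atLeast_Suc_lessThan)
    define jj where "jj s = min (nat \<lfloor>s*n\<rfloor>) (n-1)" for s :: real
    have jj: "real (jj s) \<le> s * n \<and> s*n \<le> real (jj s) + 1 \<and> jj s < n" if "s \<in> {0..1}" for s
      unfolding jj_def using jj_bounds[of s n] that n1 by auto
    define \<phi> where "\<phi> w s = P (xs (jj s)) (h(s,w)) + cc (jj s)" for w s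
    have xsU: "xs j \<in> U" if "j < n" for j using X[OF tt01[OF that]] xs_def by simp
    have inT: "h(s,w) \<in> U \<inter> T (xs j)" if "j < n" "s\<in>{0..1}" "w\<in>U" "dist w w0 < \<epsilon>/2"
       "\<bar>s - tt j\<bar> < \<epsilon>/2" for j s w
      using X[OF tt01[OF that(1)]] that unfolding xs_def by blast
    have C1: "h(s,w) \<in> U \<inter> T (xs j) \<and> \<phi> w s = P (xs j) (h(s,w)) + cc j"
      if j: "j < n" and s: "s\<in>{0..1}" and w: "w\<in>U" "dist w w0 < \<epsilon>/2"
        and sl: "real j - 1 < s * n" and su: "s * n < real j + 2" for j and s :: real and w
    proof -
      have nn: "real n > 0" using n1 by simp
      have "\<bar>s - tt j\<bar> < 3/(2*n)"
      proof -
        have q: "\<bar>s*n - (real j + 1/2)\<bar> < 3/2" using sl su by linarith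
        have e: "s - tt j = (s*n - (real j + 1/2)) / n" using nn unfolding tt_def
          by (simp add: field_simps)
        have "\<bar>s*n - (real j + 1/2)\<bar> / n < (3/2) / n" by (rule divide_strict_right_mono[OF q nn])
        moreover have "\<bar>s - tt j\<bar> = \<bar>s*n - (real j + 1/2)\<bar> / n" unfolding e using nn by (simp add: abs_divide)
        moreover have "(3/2) / real n = 3/(2*n)" by simp
        ultimately show ?thesis by linarith
      qed
      then have A: "h(s,w) \<in> U \<inter> T (xs j)" using inT[OF j s w] n\<epsilon> by linarith
      define k where "k = jj s"
      have k: "real k \<le> s * n" "s*n \<le> real k + 1" "k < n" using jj[OF s] k_def by auto
      have "\<bar>s - tt k\<bar> \<le> 1/(2*n)"
      proof -
        have q: "\<bar>s*n - (real k + 1/2)\<bar> \<le> 1/2" using k by linarith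
        have e: "s - tt k = (s*n - (real k + 1/2)) / n" using nn unfolding tt_def
          by (simp add: field_simps)
        have "\<bar>s*n - (real k + 1/2)\<bar> / n \<le> (1/2) / n" by (rule divide_right_mono[OF q]) (use nn in simp)
        moreover have "\<bar>s - tt k\<bar> = \<bar>s*n - (real k + 1/2)\<bar> / n" unfolding e using nn by (simp add: abs_divide)
        moreover have "(1/2) / real n = 1/(2*n)" by simp
        ultimately show ?thesis by linarith
      qed
      moreover have "1/(2*n) < \<epsilon>/2" using n\<epsilon> nn by (simp add: field_simps)
      ultimately have B: "h(s,w) \<in> U \<inter> T (xs k)" using inT[OF k(3) s w] by linarith
      have kj: "k = j \<or> k = Suc j \<or> Suc k = j" using k sl su by linarith
      show ?thesis
      proof (intro conjI A)
        show "\<phi> w s = P (xs j) (h(s,w)) + cc j"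
          using kj
        proof (elim disjE)
          assume "k = j" then show ?thesis by (simp add: \<phi>_def k_def)
        next
          assume kS: "k = Suc j"
          have "P (xs k) (h(s,w)) - P (xs j) (h(s,w)) = D (xs k) (xs j)"
            using D[OF xsU[OF k(3)] xsU[OF j]] A B by auto
          then show ?thesis using cc[of j] kS k(3) by (simp add: \<phi>_def k_def[symmetric] algebra_simps)
        next
          assume kS: "Suc k = j"
          have "P (xs j) (h(s,w)) - P (xs k) (h(s,w)) = D (xs j) (xs k)"
            using D[OF xsU[OF j] xsU[OF k(3)]] A B by auto
          then show ?thesis using cc[of k] kS j by (simp add: \<phi>_def k_def[symmetric] algebra_simps)
        qed
      qed
    qed
    have LW: "Lift w (\<phi> w) \<and> \<phi> w 0 = P (xs 0) w + cc 0 \<and> w \<in> T (xs 0)"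
      if w: "w \<in> U" "dist w w0 < \<epsilon>/2" for w
    proof (intro conjI)
      have jj1: "jj 1 = n - 1" unfolding jj_def by simp
      show "\<phi> w 0 = P (xs 0) w + cc 0" unfolding \<phi>_def jj_def using h0 w by simp
      have "h(0,w) \<in> U \<inter> T (xs 0)" using C1[of 0 0 w] w n1 by simp
      then show "w \<in> T (xs 0)" using h0 w by simp
      show "Lift w (\<phi> w)" unfolding Lift_def
      proof (intro conjI ballI)
        show "\<phi> w 1 = 0" unfolding \<phi>_def jj1 cc_def using h1 w by simp
        fix t :: real assume t: "t \<in> {0..1}"
        have jt: "real (jj t) \<le> t * n" "t*n \<le> real (jj t) + 1" "jj t < n" using jj[OF t] by auto
        show "\<exists>x\<in>U. \<exists>e>0. \<exists>c. \<forall>s\<in>{0..1}. dist s t < e \<longrightarrow> h (s, w) \<in> U \<inter> T x \<and> \<phi> w s = P x (h (s, w)) + c"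
        proof (intro bexI[OF _ xsU[OF jt(3)]] exI[of _ "1/n"] conjI exI[of _ "cc (jj t)"] ballI impI)
          show "0 < 1 / real n" using n1 by simp
          fix s assume s: "s \<in> {0..1}" "dist s t < 1/n"
          have d: "\<bar>s - t\<bar> * n < 1" using s(2) n1 by (simp add: dist_real_def less_divide_eq)
          have "\<bar>s*n - t*n\<bar> = \<bar>s - t\<bar> * n" by (simp add: abs_mult flip: left_diff_distrib)
          with d have "\<bar>s*n - t*n\<bar> < 1" by simp
          then have "real (jj t) - 1 < s * n" "s * n < real (jj t) + 2" using jt by linarith+
          then have "h (s, w) \<in> U \<inter> T (xs (jj t)) \<and> \<phi> w s = P (xs (jj t)) (h (s, w)) + cc (jj t)"
            using C1[OF jt(3) s(1) w] by blast
          then show "h (s, w) \<in> U \<inter> T (xs (jj t))" "\<phi> w s = P (xs (jj t)) (h (s, w)) + cc (jj t)" by blast+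
        qed
      qed
    qed
    show ?thesis
    proof (intro bexI[OF _ xsU[of 0]] exI[of _ "\<epsilon>/2"] conjI exI[of _ "cc 0"] ballI)
      show "0 < n" using n1 by simp
      show "\<epsilon>/2 > 0" using \<epsilon> by simp
      fix w assume "w \<in> U \<inter> ball w0 (\<epsilon>/2)"
      then have w: "w \<in> U" "dist w w0 < \<epsilon>/2" by (auto simp: dist_commute)
      show "w \<in> T (xs 0)" "\<exists>\<phi>. Lift w \<phi> \<and> \<phi> 0 = P (xs 0) w + cc 0"
        using LW[OF w] by blast+
    qed
  qed
  have LU: "\<psi> 0 = \<phi> 0" if "Lift w \<phi>" "Lift w \<psi>" for w \<phi> \<psi>
    using lift_unique[of U T P "\<lambda>s. h(s,w)" \<psi> \<phi> 0] compat that unfolding Lift_def by auto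
  show ?thesis
  proof (intro exI[of _ g] ballI)
    fix w0 assume "w0 \<in> U"
    then obtain x e c where x: "x\<in>U" "e>0" "\<forall>w\<in>U \<inter> ball w0 e. w \<in> T x \<and> (\<exists>\<phi>. Lift w \<phi> \<and> \<phi> 0 = P x w + c)"
      using main by meson
    show "\<exists>x\<in>U. \<exists>e>0. \<exists>c. \<forall>w\<in>U \<inter> ball w0 e. w \<in> T x \<and> g w = P x w + c"
    proof (intro bexI[OF _ x(1)] exI[of _ e] conjI exI[of _ c] ballI)
      fix w assume w: "w \<in> U \<inter> ball w0 e"
      then obtain \<phi> where \<phi>: "Lift w \<phi>" "\<phi> 0 = P x w + c" "w \<in> T x" using x(3) by blast
      have "Lift w (SOME \<phi>. Lift w \<phi>)" using \<phi>(1) by (rule someI[where P="Lift w"])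
      then have "g w = \<phi> 0" unfolding g_def using LU \<phi>(1) by blast
      then show "w \<in> T x" "g w = P x w + c" using \<phi> by simp_all
    qed (use x in auto)
  qed
qed


lemma proj_block_nth [simp]: "proj_block B z $ i = (if i \<in> B then z $ i else 0)"
  by (simp add: proj_block_def)

lemma proj_block_linear: "linear (proj_block B)"
  by (rule linearI) (auto simp: vec_eq_iff)

lemma proj_block_bl: "bounded_linear (proj_block B)"
  using proj_block_linear linear_conv_bounded_linear by blast

lemma proj_block_idem [simp]: "proj_block B (proj_block B z) = proj_block B z"
  by (simp add: vec_eq_iff)

lemma norm_proj_block_le: "norm (proj_block B z) \<le> norm z"
  unfolding norm_vec_def by (rule L2_set_mono) auto

lemma dist_proj_block_le: "dist (proj_block B z) (proj_block B y) \<le> dist z y"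
  using norm_proj_block_le[of B "z - y"] linear_diff[OF proj_block_linear, of B z y]
  by (simp add: dist_norm)

lemma lin_expand:
  fixes L :: "real^'n::finite \<Rightarrow> 'b::real_vector"
  assumes "linear L" shows "L x = (\<Sum>i\<in>UNIV. x$i *\<^sub>R L (axis i 1))"
proof -
  have "L x = L (\<Sum>i\<in>UNIV. x$i *\<^sub>R axis i 1)" using basis_expansion[of x] by (simp add: scalar_mult_eq_scaleR)
  then show ?thesis using assms by (simp add: linear_sum linear_scale o_def)
qed

lemma partition_sum:
  assumes "is_slot_partition K B"
  shows "(\<Sum>k<K. proj_block (B k) z) = z"
proof -
  have "(\<Sum>k<K. proj_block (B k) z) $ i = z $ i" for i
  proof -
    obtain k0 where k0: "k0 < K" "i \<in> B k0" using assms unfolding is_slot_partition_def by blast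
    have "\<forall>k<K. (i \<in> B k) = (k = k0)" using assms k0 unfolding is_slot_partition_def by blast
    then have "(\<Sum>k<K. proj_block (B k) z $ i) = (\<Sum>k<K. if k = k0 then z $ i else 0)"
      by (intro sum.cong) auto
    then show ?thesis using k0 by simp
  qed
  then show ?thesis by (simp add: vec_eq_iff)
qed


lemma bilin_zero:
  fixes Q :: "(real^'n::finite) \<Rightarrow>\<^sub>L ((real^'n) \<Rightarrow>\<^sub>L 'b::real_normed_vector)"
  assumes Z: "\<And>i j. j \<notin> Bk \<Longrightarrow> i \<in> Bk \<Longrightarrow> Q (axis j 1) (axis i 1) = 0"
   and pu: "proj_block Bk u = 0" and pv: "proj_block Bk v = v"
  shows "Q u v = 0"
proof -
  have u: "u$j = 0" if "j\<in>Bk" for j using arg_cong[OF pu, of "\<lambda>x. x$j"] that by simp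
  have v: "v$i = 0" if "i\<notin>Bk" for i using arg_cong[OF pv, of "\<lambda>x. x$i"] that by simp
  have lin1: "linear (\<lambda>u. blinfun_apply (blinfun_apply Q u) v)"
    by (intro bounded_linear.linear bounded_linear_compose[OF blinfun.bounded_linear_left blinfun.bounded_linear_right])
  have inner: "Q (axis j 1) v = 0" if "j \<notin> Bk" for j
  proof -
    have "Q (axis j 1) v = (\<Sum>i\<in>UNIV. v$i *\<^sub>R Q (axis j 1) (axis i 1))"
      by (rule lin_expand) (intro bounded_linear.linear blinfun.bounded_linear_right)
    also have "\<dots> = 0" using v Z[OF that] by (intro sum.neutral) auto
    finally show ?thesis .
  qed
  have "Q u v = (\<Sum>j\<in>UNIV. u$j *\<^sub>R Q (axis j 1) v)"
    using lin_expand[OF lin1] .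
  also have "\<dots> = 0" using u inner by (intro sum.neutral) auto
  finally show ?thesis .
qed

lemma fiber_const:
  fixes f' :: "real^'n::finite \<Rightarrow> ((real^'n) \<Rightarrow>\<^sub>L 'b::real_normed_vector)"
  assumes op: "open \<Omega>"
    and pc: "\<And>a'. a'\<in>\<Omega> \<Longrightarrow> path_connected {a\<in>\<Omega>. \<forall>i\<in>Bk. a$i = a'$i}"
    and d2: "\<forall>z\<in>\<Omega>. (f' has_derivative blinfun_apply (f'' z)) (at z)"
    and Z: "\<And>z u v. z\<in>\<Omega> \<Longrightarrow> proj_block Bk u = 0 \<Longrightarrow> proj_block Bk v = v \<Longrightarrow> f'' z u v = 0"
    and a: "a\<in>\<Omega>" and b: "b\<in>\<Omega>" and ab: "proj_block Bk a = proj_block Bk b" and pv: "proj_block Bk v = v"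
  shows "f' a v = f' b v"
proof -
  have dp: "(proj_block Bk has_derivative proj_block Bk) (at u)" for u :: "real^'n"
    by (rule bounded_linear_imp_has_derivative[OF proj_block_bl])
  define F where "F = {c\<in>\<Omega>. \<forall>i\<in>Bk. c$i = a$i}"
  have conn: "connected F" unfolding F_def using pc[OF a] path_connected_imp_connected by blast
  have aF: "a \<in> F" using a by (simp add: F_def)
  have "b$i = a$i" if "i\<in>Bk" for i using arg_cong[OF ab, of "\<lambda>x. x$i"] that by simp
  then have bF: "b \<in> F" using b by (auto simp: F_def)
  show ?thesis
  proof (rule connected_local_const[OF conn aF bF, where f="\<lambda>c. f' c v"], rule ballI)
    fix c assume cF: "c \<in> F"
    then have cO: "c \<in> \<Omega>" by (simp add: F_def)
    obtain r where r: "r > 0" "ball c r \<subseteq> \<Omega>" using op cO openE by blast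
    define M where "M = {c'. \<forall>i\<in>Bk. c'$i = a$i}"
    have cvM: "convex M" unfolding M_def convex_def
      by (auto simp: algebra_simps) (metis distrib_right mult_1)
    define S where "S = M \<inter> ball c r"
    have cvS: "convex S" unfolding S_def using cvM by (simp add: convex_Int)
    define \<iota> where "\<iota> u = u + proj_block Bk a - proj_block Bk u" for u
    have \<iota>S: "\<iota> u = u" if "u \<in> S" for u
      using that unfolding \<iota>_def S_def M_def by (auto simp: vec_eq_iff)
    have "\<exists>C. \<forall>u\<in>S. f' (\<iota> u) v = C"
    proof (rule has_derivative_zero_constant[OF cvS])
      fix u assume uS: "u \<in> S"
      then have uO: "u \<in> \<Omega>" using r S_def by auto
      have "((\<lambda>u. u + proj_block Bk a - proj_block Bk u) has_derivative (\<lambda>h. h + 0 - proj_block Bk h)) (at u)"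
        by (intro has_derivative_diff has_derivative_add has_derivative_ident has_derivative_const dp)
      then have di: "(\<iota> has_derivative (\<lambda>h. h - proj_block Bk h)) (at u)"
        by (simp add: \<iota>_def[abs_def])
      have d2u: "(f' has_derivative blinfun_apply (f'' (\<iota> u))) (at (\<iota> u))" using d2 uO \<iota>S[OF uS] by simp
      have "((\<lambda>u. f' (\<iota> u)) has_derivative (\<lambda>h. f'' (\<iota> u) (h - proj_block Bk h))) (at u)"
        using has_derivative_compose[OF di d2u] .
      then have "((\<lambda>u. f' (\<iota> u) v) has_derivative (\<lambda>h. f'' (\<iota> u) (h - proj_block Bk h) v)) (at u)"
        by (rule bounded_linear.has_derivative[OF blinfun.bounded_linear_left])
      moreover have "(\<lambda>h. f'' (\<iota> u) (h - proj_block Bk h) v) = (\<lambda>h. 0)"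
      proof
        fix h
        have "proj_block Bk (h - proj_block Bk h) = 0" by (simp add: vec_eq_iff)
        then show "f'' (\<iota> u) (h - proj_block Bk h) v = 0" using Z[OF _ _ pv] uO \<iota>S[OF uS] by simp
      qed
      ultimately show "((\<lambda>u. f' (\<iota> u) v) has_derivative (\<lambda>h. 0)) (at u within S)"
        by (simp add: has_derivative_at_withinI)
    qed
    then obtain C where C: "\<forall>u\<in>S. f' u v = C" using \<iota>S by auto
    have cS: "c \<in> S" using cF r unfolding S_def M_def F_def by auto
    show "eventually (\<lambda>c'. f' c v = f' c' v) (at c within F)"
      unfolding eventually_at
    proof (intro exI[of _ r] conjI allI impI ballI)
      show "r > 0" by fact
      fix c' assume "c' \<in> F" "c' \<noteq> c \<and> dist c' c < r"
      then have "c' \<in> S" unfolding S_def M_def F_def by (auto simp: dist_commute)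
      then show "f' c v = f' c' v" using C cS by simp
    qed
  qed
qed


lemma slot_primitive:
  fixes Bk :: "'n::finite set" and f :: "real^'n \<Rightarrow> 'b::real_normed_vector"
    and f' :: "real^'n \<Rightarrow> ((real^'n) \<Rightarrow>\<^sub>L 'b)"
  assumes op: "open \<Omega>" and contr: "contractible (proj_block Bk ` \<Omega>)"
   and d1: "\<forall>z\<in>\<Omega>. (f has_derivative blinfun_apply (f' z)) (at z)"
   and FL: "\<And>a b v. a\<in>\<Omega> \<Longrightarrow> b\<in>\<Omega> \<Longrightarrow> proj_block Bk a = proj_block Bk b \<Longrightarrow> proj_block Bk v = v \<Longrightarrow> f' a v = f' b v"
  shows "\<exists>g. \<forall>z0\<in>\<Omega>. ((\<lambda>z. g (proj_block Bk z)) has_derivative (\<lambda>h. f' z0 (proj_block Bk h))) (at z0)"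
proof -
  define \<pi> where "\<pi> = proj_block Bk"
  have lin: "linear \<pi>" unfolding \<pi>_def by (rule proj_block_linear)
  have idem: "\<pi> (\<pi> z) = \<pi> z" for z unfolding \<pi>_def by simp
  have dp: "(\<pi> has_derivative \<pi>) (at u)" for u
    unfolding \<pi>_def by (rule bounded_linear_imp_has_derivative[OF proj_block_bl])
  define U where "U = \<pi> ` \<Omega>"
  define zc where "zc x = (SOME z. z \<in> \<Omega> \<and> \<pi> z = x)" for x
  have zc: "zc x \<in> \<Omega> \<and> \<pi> (zc x) = x" if "x\<in>U" for x
    unfolding zc_def by (rule someI_ex) (use that U_def in auto)
  define \<rho> where "\<rho> x = (SOME r. r > 0 \<and> ball (zc x) r \<subseteq> \<Omega>)" for x
  have \<rho>: "\<rho> x > 0 \<and> ball (zc x) (\<rho> x) \<subseteq> \<Omega>" if "x\<in>U" for x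
    unfolding \<rho>_def by (rule someI_ex) (use op zc[OF that] openE in blast)
  define T where "T x = ball x (\<rho> x)" for x
  define P where "P x w = f (\<pi> w + (zc x - x))" for x w
  have Pr: "\<pi> (zc x - x) = 0" if "x\<in>U" for x
  proof -
    have "\<pi> x = x" using zc[OF that] idem by metis
    then show ?thesis using linear_diff[OF lin] zc[OF that] by simp
  qed
  have Upi: "\<pi> w = w" if "w\<in>U" for w using that idem unfolding U_def by auto
  have inO: "w + (zc x - x) \<in> \<Omega>" if "x\<in>U" "w \<in> T x" for x w
  proof -
    have "dist (zc x) (w + (zc x - x)) = dist x w" by (simp add: dist_norm algebra_simps)
    then show ?thesis using \<rho>[OF that(1)] that(2) unfolding T_def by auto
  qed
  have inU: "w \<in> U" if "x\<in>U" "\<pi> w = w" "w \<in> T x" for x w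
  proof -
    have "\<pi> (w + (zc x - x)) = w" using linear_add[OF lin] Pr[OF that(1)] that(2) by simp
    then show ?thesis unfolding U_def using inO[OF that(1,3)] by (metis image_eqI)
  qed
  have PD: "(P x has_derivative (\<lambda>h. f' (w + (zc x - x)) (\<pi> h))) (at w)"
    if "x\<in>U" "w \<in> U" "w \<in> T x" for x w
  proof -
    have "((\<lambda>w. \<pi> w + (zc x - x)) has_derivative (\<lambda>h. \<pi> h + 0)) (at w)"
      by (intro has_derivative_add dp has_derivative_const)
    then have "((\<lambda>w. f (\<pi> w + (zc x - x))) has_derivative (\<lambda>h. f' (\<pi> w + (zc x - x)) (\<pi> h + 0))) (at w)"
      by (rule has_derivative_compose) (use d1 inO[OF that(1,3)] Upi[OF that(2)] in simp)
    then show ?thesis using Upi[OF that(2)] by (simp add: P_def[abs_def])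
  qed
  have compat: "\<exists>d. \<forall>w\<in>U \<inter> T x \<inter> T y. P x w - P y w = d" if x: "x\<in>U" and y: "y\<in>U" for x y
  proof -
    define S where "S = {w. \<pi> w = w} \<inter> T x \<inter> T y"
    have SU: "S = U \<inter> T x \<inter> T y" unfolding S_def using inU[OF x] Upi by blast
    have cv: "convex {w. \<pi> w = w}" unfolding convex_def
      using linear_add[OF lin] linear_scale[OF lin] by simp
    have cvS: "convex S" unfolding S_def T_def by (intro convex_Int cv convex_ball)
    have "\<exists>d. \<forall>w\<in>S. P x w - P y w = d"
    proof (rule has_derivative_zero_constant[OF cvS])
      fix w assume wS: "w \<in> S"
      then have w: "w \<in> U" "w \<in> T x" "w \<in> T y" using SU by auto
      have "((\<lambda>w. P x w - P y w) has_derivative (\<lambda>h. f' (w + (zc x - x)) (\<pi> h) - f' (w + (zc y - y)) (\<pi> h))) (at w)"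
        by (intro has_derivative_diff PD x y w)
      moreover have "f' (w + (zc x - x)) (\<pi> h) = f' (w + (zc y - y)) (\<pi> h)" for h
      proof (rule FL[unfolded \<pi>_def[symmetric]])
        show "w + (zc x - x) \<in> \<Omega>" "w + (zc y - y) \<in> \<Omega>" using inO x y w by auto
        show "\<pi> (w + (zc x - x)) = \<pi> (w + (zc y - y))"
          using linear_add[OF lin] Pr[OF x] Pr[OF y] by simp
        show "\<pi> (\<pi> h) = \<pi> h" by (rule idem)
      qed
      ultimately show "((\<lambda>w. P x w - P y w) has_derivative (\<lambda>h. 0)) (at w within S)"
        by (simp add: has_derivative_at_withinI)
    qed
    then show ?thesis using SU by simp
  qed
  have Topen: "open (T x) \<and> x \<in> T x" if "x \<in> U" for x using \<rho>[OF that] T_def by simp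
  obtain g where g: "\<forall>w0\<in>U. \<exists>x\<in>U. \<exists>e>0. \<exists>c. \<forall>w\<in>U \<inter> ball w0 e. w \<in> T x \<and> g w = P x w + c"
    using global_primitive[of U T P, OF contr[folded \<pi>_def, folded U_def] Topen compat] by blast
  show ?thesis
  proof (intro exI[of _ g] ballI)
    fix z0 assume z0: "z0 \<in> \<Omega>"
    then have w0: "\<pi> z0 \<in> U" unfolding U_def by auto
    obtain x e c where x: "x\<in>U" "e>0" "\<forall>w\<in>U \<inter> ball (\<pi> z0) e. w \<in> T x \<and> g w = P x w + c"
      using g w0 by meson
    obtain r where r: "r>0" "ball z0 r \<subseteq> \<Omega>" using op z0 openE by blast
    have eqz: "g (\<pi> z) = f (\<pi> z + (zc x - x)) + c" if "z \<in> ball z0 (min e r)" for z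
    proof -
      have "z \<in> \<Omega>" using that r by auto
      then have "\<pi> z \<in> U" unfolding U_def by auto
      moreover have "dist (\<pi> z0) (\<pi> z) < e"
        using dist_proj_block_le[of Bk z0 z] that unfolding \<pi>_def by (auto simp: dist_commute)
      ultimately show ?thesis using x(3) idem unfolding P_def by auto
    qed
    have T0: "\<pi> z0 \<in> T x" using x(3) w0 x(2) by auto
    have A: "((\<lambda>w. f (\<pi> w + (zc x - x))) has_derivative (\<lambda>h. f' (\<pi> z0 + (zc x - x)) (\<pi> h))) (at (\<pi> z0))"
      using PD[OF x(1) w0 T0] unfolding P_def[abs_def] by simp
    have "((\<lambda>z. f (\<pi> (\<pi> z) + (zc x - x))) has_derivative (\<lambda>h. f' (\<pi> z0 + (zc x - x)) (\<pi> (\<pi> h)))) (at z0)"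
      using has_derivative_compose[OF dp A] .
    then have "((\<lambda>z. f (\<pi> z + (zc x - x))) has_derivative (\<lambda>h. f' (\<pi> z0 + (zc x - x)) (\<pi> h))) (at z0)"
      by (simp only: idem)
    then have "((\<lambda>z. f (\<pi> z + (zc x - x)) + c) has_derivative (\<lambda>h. f' (\<pi> z0 + (zc x - x)) (\<pi> h) + 0)) (at z0)"
      by (intro has_derivative_add has_derivative_const)
    moreover have "f' (\<pi> z0 + (zc x - x)) (\<pi> h) = f' z0 (\<pi> h)" for h
    proof (rule FL[unfolded \<pi>_def[symmetric]])
      show "\<pi> z0 + (zc x - x) \<in> \<Omega>" using inO[OF x(1) T0] .
      show "z0 \<in> \<Omega>" by fact
      show "\<pi> (\<pi> z0 + (zc x - x)) = \<pi> z0" using linear_add[OF lin] Pr[OF x(1)] idem by simp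
      show "\<pi> (\<pi> h) = \<pi> h" by (rule idem)
    qed
    ultimately have "((\<lambda>z. f (\<pi> z + (zc x - x)) + c) has_derivative (\<lambda>h. f' z0 (\<pi> h))) (at z0)"
      by simp
    then have "((\<lambda>z. g (\<pi> z)) has_derivative (\<lambda>h. f' z0 (\<pi> h))) (at z0)"
      by (rule has_derivative_transform_within_open[where s="ball z0 (min e r)"])
         (use x(2) r(1) eqz in auto)
    then show "((\<lambda>z. g (proj_block Bk z)) has_derivative (\<lambda>h. f' z0 (proj_block Bk h))) (at z0)"
      unfolding \<pi>_def .
  qed
qed


theorem mainTheorem4:
  fixes K :: nat and B :: "nat \<Rightarrow> 'n::finite set"
    and \<Omega> :: "(real^'n) set"
    and f :: "real^'n \<Rightarrow> real^'m::finite"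
    and f' :: "real^'n \<Rightarrow> ((real^'n) \<Rightarrow>\<^sub>L (real^'m))"
    and f'' :: "real^'n \<Rightarrow> ((real^'n) \<Rightarrow>\<^sub>L ((real^'n) \<Rightarrow>\<^sub>L (real^'m)))"
  assumes partition: "is_slot_partition K B"
    and open_\<Omega>: "open \<Omega>" and conn: "connected \<Omega>"
    and aligned: "aligned_connected K B \<Omega>"
    and contr: "\<forall>k<K. contractible (proj_block (B k) ` \<Omega>)"
    and d1: "\<forall>z\<in>\<Omega>. (f has_derivative blinfun_apply (f' z)) (at z)"
    and d2: "\<forall>z\<in>\<Omega>. (f' has_derivative blinfun_apply (f'' z)) (at z)"
    and c2: "continuous_on \<Omega> f''"
    and interaction: "\<forall>z\<in>\<Omega>. \<forall>k<K. \<forall>k'<K. k \<noteq> k' \<longrightarrow>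
         (\<forall>i\<in>B k. \<forall>j\<in>B k'. f'' z (axis i 1) (axis j 1) = 0)"
  shows "\<exists>fk :: nat \<Rightarrow> real^'n \<Rightarrow> real^'m.
           \<forall>z\<in>\<Omega>. f z = (\<Sum>k<K. fk k (proj_block (B k) z))"
proof -
  have K0: "K > 0"
  proof (rule ccontr)
    assume "\<not> K > 0"
    then have "(\<Union>k<K. B k) = {}" by simp
    then show False using partition unfolding is_slot_partition_def by simp
  qed
  have Zk: "f'' z u v = 0" if k: "k<K" and z: "z\<in>\<Omega>" and pu: "proj_block (B k) u = 0"
    and pv: "proj_block (B k) v = v" for k z u v
  proof (rule bilin_zero[OF _ pu pv])
    fix i j assume j: "j \<notin> B k" and i: "i \<in> B k"
    obtain k' where k': "k' < K" "j \<in> B k'" using partition unfolding is_slot_partition_def by blast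
    have "k' \<noteq> k" using j k' by auto
    show "f'' z (axis j 1) (axis i 1) = 0"
      using interaction[rule_format, OF z k'(1) k \<open>k' \<noteq> k\<close> k'(2) i] .
  qed
  have FLk: "f' a v = f' b v" if k: "k<K" and "a\<in>\<Omega>" "b\<in>\<Omega>" "proj_block (B k) a = proj_block (B k) b"
    "proj_block (B k) v = v" for k a b v
  proof (rule fiber_const[OF open_\<Omega> _ d2 _ that(2-5)])
    show "path_connected {a \<in> \<Omega>. \<forall>i\<in>B k. a $ i = a' $ i}" if "a' \<in> \<Omega>" for a'
      using aligned[unfolded aligned_connected_def, rule_format, OF k that] .
    show "f'' z u v = 0" if "z \<in> \<Omega>" "proj_block (B k) u = 0" "proj_block (B k) v = v" for z u v
      using Zk[OF k that] .
  qed
  have "\<forall>k<K. \<exists>g. \<forall>z0\<in>\<Omega>. ((\<lambda>z. g (proj_block (B k) z)) has_derivative (\<lambda>h. f' z0 (proj_block (B k) h))) (at z0)"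
  proof (intro allI impI)
    fix k assume k: "k < K"
    show "\<exists>g. \<forall>z0\<in>\<Omega>. ((\<lambda>z. g (proj_block (B k) z)) has_derivative (\<lambda>h. f' z0 (proj_block (B k) h))) (at z0)"
      by (rule slot_primitive[OF open_\<Omega> contr[rule_format, OF k] d1 FLk[OF k]])
  qed
  then have "\<exists>G. \<forall>k<K. \<forall>z0\<in>\<Omega>. ((\<lambda>z. G k (proj_block (B k) z)) has_derivative (\<lambda>h. f' z0 (proj_block (B k) h))) (at z0)"
    by (rule choice_iff'[THEN iffD1])
  then obtain G where G0: "\<forall>k<K. \<forall>z0\<in>\<Omega>. ((\<lambda>z. G k (proj_block (B k) z)) has_derivative (\<lambda>h. f' z0 (proj_block (B k) h))) (at z0)"
    by (rule exE)
  have G: "((\<lambda>z. G k (proj_block (B k) z)) has_derivative (\<lambda>h. f' z0 (proj_block (B k) h))) (at z0)"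
    if "k<K" "z0\<in>\<Omega>" for k z0 using G0[rule_format, OF that] .
  define H where "H z = f z - (\<Sum>k<K. G k (proj_block (B k) z))" for z
  have dH: "(H has_derivative (\<lambda>h. 0)) (at z0)" if z0: "z0 \<in> \<Omega>" for z0
  proof -
    have sd: "((\<lambda>z. \<Sum>k<K. G k (proj_block (B k) z)) has_derivative (\<lambda>h. \<Sum>k<K. f' z0 (proj_block (B k) h))) (at z0)"
      by (rule has_derivative_sum) (rule G, simp, rule z0)
    have fd: "(f has_derivative blinfun_apply (f' z0)) (at z0)" using d1 z0 by blast
    have "(H has_derivative (\<lambda>h. f' z0 h - (\<Sum>k<K. f' z0 (proj_block (B k) h)))) (at z0)"
      unfolding H_def[abs_def] by (rule has_derivative_diff[OF fd sd])
    moreover have "f' z0 h - (\<Sum>k<K. f' z0 (proj_block (B k) h)) = 0" for h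
    proof -
      have "(\<Sum>k<K. f' z0 (proj_block (B k) h)) = f' z0 (\<Sum>k<K. proj_block (B k) h)"
        by (simp add: blinfun.sum_right)
      then show ?thesis using partition_sum[OF partition] by simp
    qed
    ultimately show ?thesis by simp
  qed
  show ?thesis
  proof (cases "\<Omega> = {}")
    case True then show ?thesis by auto
  next
    case False
    then obtain z1 where z1: "z1 \<in> \<Omega>" by blast
    have Hc: "H z = H z1" if "z \<in> \<Omega>" for z
      using has_derivative_zero_unique_connected[OF open_\<Omega> conn dH that z1] .
    show ?thesis
    proof (intro exI[of _ "\<lambda>k w. G k w + (if k = 0 then H z1 else 0)"] ballI)
      fix z assume z: "z \<in> \<Omega>"
      have "(\<Sum>k<K. G k (proj_block (B k) z) + (if k = 0 then H z1 else 0))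
            = (\<Sum>k<K. G k (proj_block (B k) z)) + H z1"
        using K0 by (simp add: sum.distrib)
      also have "\<dots> = f z"
      proof -
        have e: "H z1 = f z - (\<Sum>k<K. G k (proj_block (B k) z))"
          using Hc[OF z] unfolding H_def[of z] by simp
        show ?thesis unfolding e by simp
      qed
      finally show "f z = (\<Sum>k<K. G k (proj_block (B k) z) + (if k = 0 then H z1 else 0))" by simp
    qed
  qed
qed

end
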